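(* For positive integers $p,m$ and real $\alpha>0$, $$\Big((-1)^{m-1}-(-1)^{p-1}\Big)\sum_{n=1}^\infty\frac{H_{n+2\alpha}}{(n+\alpha)^{p+m}}=\Big((-1)^{m-1}-(-1)^{p-1}\Big)H_\alpha\,\zeta(p+m,\alpha+1)+\sum_{i=1}^{p-1}(-1)^{i-1}\zeta(p+1-i,\alpha+1)\,\zeta(m+i,\alpha+1)-\sum_{i=1}^{m-1}(-1)^{i-1}\zeta(m+1-i,\alpha+1)\,\zeta(p+i,\alpha+1).$$ In particular $\sum_{n\ge1}\frac{H_{n+2\alpha}}{(n+\alpha)^3}=H_\alpha\zeta(3,\alpha+1)+\frac12\zeta(2,\alpha+1)^2$.
   Context: $H_\alpha := \sum_{k=1}^\infty\left(\frac1k-\frac1{k+\alpha}\right)$ for real $\alpha$ not a negative integer. $\zeta(s,\alpha+1)=\sum_{n=1}^\infty (n+\alpha)^{-s}$ is the Hurwitz zeta function. Empty sums are $0$. *)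

theory Defs
  imports Complex_Main
begin

definition genH :: "real \<Rightarrow> real" where
  "genH \<alpha> = (\<Sum>k. 1 / real (Suc k) - 1 / (real (Suc k) + \<alpha>))"

text \<open>Hurwitz zeta zeta(s, alpha+1) = sum_{n>=1} (n+alpha)^(-s), for natural exponent s.\<close>
definition hzeta :: "nat \<Rightarrow> real \<Rightarrow> real" where
  "hzeta s \<alpha> = (\<Sum>n. 1 / (real (Suc n) + \<alpha>) ^ s)"

end

theory Submission imports Defs "HOL-Analysis.Analysis" begin

definition XX :: "real \<Rightarrow> nat \<Rightarrow> real" where "XX \<alpha> k = real (Suc k) + \<alpha>"

lemma XX_ge1: "\<alpha> > 0 \<Longrightarrow> XX \<alpha> k \<ge> 1" by (simp add: XX_def)
lemma XX_pos: "\<alpha> > 0 \<Longrightarrow> XX \<alpha> k > 0" by (simp add: XX_def)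
lemma XX_pow_pos: "\<alpha> > 0 \<Longrightarrow> XX \<alpha> k ^ s > 0" by (simp add: XX_pos)

lemma zeta_has_sum:
  assumes "\<alpha> > 0" "s \<ge> 2"
  shows "((\<lambda>n. 1 / XX \<alpha> n ^ s) has_sum hzeta s \<alpha>) UNIV"
proof -
  have s1: "summable (\<lambda>n. inverse (real (Suc n) ^ s))"
    using inverse_power_summable[of s] assms by (subst summable_Suc_iff) simp
  have "summable (\<lambda>n. 1 / XX \<alpha> n ^ s)"
  proof (rule summable_comparison_test'[OF s1])
    fix n :: nat assume "n \<ge> 0"
    have "real (Suc n) ^ s \<le> XX \<alpha> n ^ s"
      using assms by (intro power_mono) (auto simp: XX_def)
    moreover have "real (Suc n) ^ s > 0" by simp
    ultimately show "norm (1 / XX \<alpha> n ^ s) \<le> inverse (real (Suc n) ^ s)"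
      using assms XX_ge1[of \<alpha> n]
      by (simp add: divide_simps)
  qed
  hence "(\<lambda>n. 1 / XX \<alpha> n ^ s) sums hzeta s \<alpha>"
    by (simp add: hzeta_def XX_def summable_sums)
  thus ?thesis
    by (rule sums_nonneg_imp_has_sum) (use XX_pos[OF assms(1)] in \<open>auto intro: less_imp_le\<close>)
qed

lemma prod_has_sum:
  fixes u v :: "nat \<Rightarrow> real"
  assumes "(u has_sum U) UNIV" "(v has_sum V) UNIV" "\<And>n. u n \<ge> 0" "\<And>n. v n \<ge> 0"
  shows "((\<lambda>(n,k). u n * v k) has_sum U * V) UNIV"
proof -
  have r: "\<And>n. n \<in> UNIV \<Longrightarrow> ((\<lambda>k. (\<lambda>(n,k). u n * v k) (n, k)) has_sum u n * V) UNIV"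
    using has_sum_cmult_right[OF assms(2)] by simp
  have g: "((\<lambda>n. u n * V) has_sum U * V) UNIV"
    using has_sum_cmult_left[OF assms(1)] by simp
  have "(\<lambda>(n,k). u n * v k) summable_on Sigma UNIV (\<lambda>_. UNIV)"
    by (rule summable_on_SigmaI[OF r]) (use g assms in \<open>auto simp: summable_on_def\<close>)
  from has_sum_SigmaI[OF r g this] show ?thesis by simp
qed

lemma pf_aux:
  fixes A B P Q :: real assumes "A > 0" "B > 0" "P > 0" "Q > 0"
  shows "1 / (B*Q) * (1 / (A*P)) = 1 / (P * (B*Q) * (A+B)) + 1 / (A*P * Q * (A+B))"
proof -
  have "1 / (P * (B*Q) * (A+B)) + 1 / (A*P * Q * (A+B)) = (A + B) / (A*P*B*Q*(A+B))"
  proof -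
    have D: "P*(B*Q)*(A+B) > 0" "A*P*Q*(A+B) > 0" "A*P*B*Q*(A+B) > 0" using assms by auto
    have "1 / (P * (B*Q) * (A+B)) = A / (A*P*B*Q*(A+B))" using assms D by (simp add: field_simps)
    moreover have "1 / (A*P * Q * (A+B)) = B / (A*P*B*Q*(A+B))" using assms D by (simp add: field_simps)
    ultimately show ?thesis by (simp add: add_divide_distrib)
  qed
  also have "\<dots> = 1 / (A*P*B*Q)" using assms by simp
  finally show ?thesis by (simp add: algebra_simps)
qed

definition tt :: "nat \<Rightarrow> nat \<Rightarrow> real \<Rightarrow> nat \<times> nat \<Rightarrow> real" where
  "tt a b \<alpha> = (\<lambda>(n,k). 1 / (XX \<alpha> k ^ a * XX \<alpha> n ^ b * (XX \<alpha> k + XX \<alpha> n)))"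

definition TT :: "nat \<Rightarrow> nat \<Rightarrow> real \<Rightarrow> real" where
  "TT a b \<alpha> = infsum (tt a b \<alpha>) UNIV"

lemma tt_nonneg: "\<alpha> > 0 \<Longrightarrow> tt a b \<alpha> x \<ge> 0"
proof -
  assume a: "\<alpha> > 0"
  obtain n k where x: "x = (n,k)" by (cases x)
  have "XX \<alpha> k ^ a * XX \<alpha> n ^ b * (XX \<alpha> k + XX \<alpha> n) > 0"
    using XX_pos[OF a] by (intro mult_pos_pos add_pos_pos) auto
  thus ?thesis by (simp add: x tt_def)
qed

lemma tt_summable:
  assumes "\<alpha> > 0" "a \<ge> 1" "b \<ge> 1" "a + b \<ge> 3"
  shows "tt a b \<alpha> summable_on UNIV"
proof -
  have "((\<lambda>(n,k). 1 / XX \<alpha> n ^ 2 * (1 / XX \<alpha> k ^ 2)) has_sum hzeta 2 \<alpha> * hzeta 2 \<alpha>) UNIV"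
    by (rule prod_has_sum[OF zeta_has_sum zeta_has_sum]) (use assms XX_pow_pos[OF assms(1)] in \<open>auto intro: less_imp_le\<close>)
  hence sm: "(\<lambda>(n,k). 1 / XX \<alpha> n ^ 2 * (1 / XX \<alpha> k ^ 2)) summable_on UNIV"
    by (auto simp: summable_on_def)
  show ?thesis
  proof (rule summable_on_comparison_test[OF sm])
    fix x :: "nat \<times> nat" assume "x \<in> UNIV"
    obtain n k where x: "x = (n,k)" by (cases x)
    define A where "A = XX \<alpha> k" define B where "B = XX \<alpha> n"
    have A1: "A \<ge> 1" and B1: "B \<ge> 1" using XX_ge1[OF assms(1)] by (auto simp: A_def B_def)
    have "A^2 * B^2 \<le> A ^ a * B ^ b * (A + B)"
    proof (cases "a \<ge> 2")
      case True
      have "A^2 \<le> A^a" using A1 True by (intro power_increasing) auto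
      moreover have "B \<le> B^b" using B1 assms by (metis power_increasing power_one_right)
      moreover have "B \<le> A + B" using A1 by simp
      ultimately have "A^2 * (B * B) \<le> A^a * (B^b * (A+B))"
        using A1 B1 by (intro mult_mono) auto
      thus ?thesis by (simp add: power2_eq_square algebra_simps)
    next
      case False
      hence "b \<ge> 2" using assms by auto
      have "B^2 \<le> B^b" using B1 \<open>b \<ge> 2\<close> by (intro power_increasing) auto
      moreover have "A \<le> A^a" using A1 assms by (metis power_increasing power_one_right)
      moreover have "A \<le> A + B" using B1 by simp
      ultimately have "B^2 * (A * A) \<le> B^b * (A^a * (A+B))"
        using A1 B1 by (intro mult_mono) auto
      thus ?thesis by (simp add: power2_eq_square algebra_simps)
    qed
    moreover have "A^2 * B^2 > 0" using A1 B1 by simp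
    ultimately have "1 / (A ^ a * B ^ b * (A + B)) \<le> 1 / (A^2 * B^2)"
      by (intro divide_left_mono) auto
    thus "tt a b \<alpha> x \<le> (\<lambda>(n,k). 1 / XX \<alpha> n ^ 2 * (1 / XX \<alpha> k ^ 2)) x"
      by (simp add: x tt_def A_def[symmetric] B_def[symmetric] mult.commute)
  qed (rule tt_nonneg[OF assms(1)])
qed

lemma TT_sym: "TT a b \<alpha> = TT b a \<alpha>"
proof -
  have "TT a b \<alpha> = infsum (tt a b \<alpha>) (prod.swap ` UNIV)" by (simp add: TT_def)
  also have "\<dots> = infsum (tt a b \<alpha> \<circ> prod.swap) UNIV" by (rule infsum_reindex) simp
  also have "tt a b \<alpha> \<circ> prod.swap = tt b a \<alpha>" by (auto simp: tt_def fun_eq_iff algebra_simps)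
  finally show ?thesis by (simp add: TT_def)
qed

lemma TT_rec:
  assumes "\<alpha> > 0" "a \<ge> 2" "b \<ge> 2"
  shows "hzeta a \<alpha> * hzeta b \<alpha> = TT (a-1) b \<alpha> + TT a (b-1) \<alpha>"
proof -
  have "((\<lambda>(n,k). 1 / XX \<alpha> n ^ b * (1 / XX \<alpha> k ^ a)) has_sum hzeta b \<alpha> * hzeta a \<alpha>) UNIV"
    by (rule prod_has_sum[OF zeta_has_sum zeta_has_sum]) (use assms XX_pow_pos[OF assms(1)] in \<open>auto intro: less_imp_le\<close>)
  moreover have "(\<lambda>(n,k). 1 / XX \<alpha> n ^ b * (1 / XX \<alpha> k ^ a)) = (\<lambda>x. tt (a-1) b \<alpha> x + tt a (b-1) \<alpha> x)"
  proof
    fix x :: "nat \<times> nat"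
    obtain n k where x: "x = (n,k)" by (cases x)
    define A where "A = XX \<alpha> k" define B where "B = XX \<alpha> n"
    have A1: "A \<ge> 1" and B1: "B \<ge> 1" using XX_ge1[OF assms(1)] by (auto simp: A_def B_def)
    have ea: "A ^ a = A * A^(a-1)" using assms by (metis Suc_diff_1 less_le_trans pos2 power_Suc)
    have eb: "B ^ b = B * B^(b-1)" using assms by (metis Suc_diff_1 less_le_trans pos2 power_Suc)
    have "1 / B ^ b * (1 / A ^ a) = 1 / (A ^ (a-1) * B ^ b * (A + B)) + 1 / (A ^ a * B ^ (b-1) * (A + B))"
    proof -
      have P: "A^(a-1) > 0" "B^(b-1) > 0" "A > 0" "B > 0" using A1 B1 by auto
      show ?thesis unfolding ea eb using pf_aux[OF P(3,4,1,2)] by simp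
    qed
    thus "(\<lambda>(n,k). 1 / XX \<alpha> n ^ b * (1 / XX \<alpha> k ^ a)) x = tt (a-1) b \<alpha> x + tt a (b-1) \<alpha> x"
      by (simp add: x tt_def A_def[symmetric] B_def[symmetric])
  qed
  ultimately have "((\<lambda>x. tt (a-1) b \<alpha> x + tt a (b-1) \<alpha> x) has_sum hzeta a \<alpha> * hzeta b \<alpha>) UNIV"
    by (simp add: mult.commute)
  moreover have "((\<lambda>x. tt (a-1) b \<alpha> x + tt a (b-1) \<alpha> x) has_sum TT (a-1) b \<alpha> + TT a (b-1) \<alpha>) UNIV"
    unfolding TT_def using assms
    by (intro has_sum_add has_sum_infsum tt_summable) auto
  ultimately show ?thesis using has_sum_unique by blast
qed

lemma genH_sums:
  assumes "\<beta> \<ge> 0"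
  shows "(\<lambda>k. 1 / real (Suc k) - 1 / (real (Suc k) + \<beta>)) sums genH \<beta>"
proof -
  have s1: "summable (\<lambda>n. \<beta> * inverse (real (Suc n) ^ 2))"
    using inverse_power_summable[of 2] by (intro summable_mult) (subst summable_Suc_iff, simp)
  have "summable (\<lambda>k. 1 / real (Suc k) - 1 / (real (Suc k) + \<beta>))"
  proof (rule summable_comparison_test'[OF s1])
    fix n :: nat assume "n \<ge> 0"
    define N where "N = real (Suc n)"
    have N: "N > 0" "N \<ge> 1" by (auto simp: N_def)
    have e: "1 / N - 1 / (N + \<beta>) = \<beta> / (N * (N + \<beta>))"
      using N assms by (simp add: field_simps)
    have "\<beta> / (N * (N + \<beta>)) \<le> \<beta> / (N * N)"
      using N assms by (intro divide_left_mono mult_left_mono) auto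
    moreover have "\<beta> / (N * (N + \<beta>)) \<ge> 0" using N assms by simp
    ultimately show "norm (1 / real (Suc n) - 1 / (real (Suc n) + \<beta>)) \<le> \<beta> * inverse (real (Suc n) ^ 2)"
      unfolding N_def[symmetric] e by (simp add: power2_eq_square divide_inverse)
  qed
  thus ?thesis by (simp add: genH_def summable_sums)
qed

lemma main_series:
  assumes "\<alpha> > 0" "s \<ge> 3"
  shows "(\<lambda>n. genH (real (Suc n) + 2 * \<alpha>) / (real (Suc n) + \<alpha>) ^ s) sums (genH \<alpha> * hzeta s \<alpha> + TT 1 (s-1) \<alpha>)"
proof -
  define D where "D = (\<lambda>n. (genH (real (Suc n) + 2 * \<alpha>) - genH \<alpha>) / XX \<alpha> n ^ s)"
  have inner: "((\<lambda>k. tt 1 (s-1) \<alpha> (n,k)) has_sum D n) UNIV" for n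
  proof -
    have "(\<lambda>k. (1 / real (Suc k) - 1 / (real (Suc k) + (real (Suc n) + 2 * \<alpha>)))
              - (1 / real (Suc k) - 1 / (real (Suc k) + \<alpha>)))
          sums (genH (real (Suc n) + 2 * \<alpha>) - genH \<alpha>)"
      using assms by (intro sums_diff genH_sums) auto
    hence "(\<lambda>k. ((1 / real (Suc k) - 1 / (real (Suc k) + (real (Suc n) + 2 * \<alpha>)))
              - (1 / real (Suc k) - 1 / (real (Suc k) + \<alpha>))) / XX \<alpha> n ^ s) sums D n"
      unfolding D_def by (rule sums_divide)
    moreover have "(\<lambda>k. ((1 / real (Suc k) - 1 / (real (Suc k) + (real (Suc n) + 2 * \<alpha>)))
              - (1 / real (Suc k) - 1 / (real (Suc k) + \<alpha>))) / XX \<alpha> n ^ s) = (\<lambda>k. tt 1 (s-1) \<alpha> (n,k))"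
    proof
      fix k
      define A where "A = XX \<alpha> k" define B where "B = XX \<alpha> n"
      have A: "A > 0" and B: "B > 0" using XX_pos[OF assms(1)] by (auto simp: A_def B_def)
      have eb: "B ^ s = B * B^(s-1)" using assms by (metis Suc_diff_1 less_le_trans zero_less_numeral power_Suc)
      have P: "B^(s-1) > 0" using B by simp
      have e1: "real (Suc k) + (real (Suc n) + 2 * \<alpha>) = A + B" "real (Suc k) + \<alpha> = A"
        by (auto simp: A_def B_def XX_def)
      have "((1 / real (Suc k) - 1 / (real (Suc k) + (real (Suc n) + 2 * \<alpha>)))
              - (1 / real (Suc k) - 1 / (real (Suc k) + \<alpha>))) / B ^ s = (1/A - 1/(A+B)) / (B * B^(s-1))"
        unfolding e1 eb by simp
      also have "1/A - 1/(A+B) = B / (A * (A+B))" using A B by (simp add: field_simps)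
      also have "B / (A * (A+B)) / (B * B^(s-1)) = B / (B * (A * B^(s-1) * (A+B)))"
        by (simp add: divide_divide_eq_left algebra_simps)
      also have "\<dots> = 1 / (A ^ 1 * B^(s-1) * (A + B))"
        using B by simp
      finally show "((1 / real (Suc k) - 1 / (real (Suc k) + (real (Suc n) + 2 * \<alpha>)))
              - (1 / real (Suc k) - 1 / (real (Suc k) + \<alpha>))) / XX \<alpha> n ^ s = tt 1 (s-1) \<alpha> (n,k)"
        by (simp add: tt_def A_def B_def)
    qed
    ultimately have "(\<lambda>k. tt 1 (s-1) \<alpha> (n,k)) sums D n" by simp
    thus ?thesis by (rule sums_nonneg_imp_has_sum) (rule tt_nonneg[OF assms(1)])
  qed
  have T: "(tt 1 (s-1) \<alpha> has_sum TT 1 (s-1) \<alpha>) (Sigma UNIV (\<lambda>_. UNIV))"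
    unfolding TT_def using assms by (simp add: has_sum_infsum tt_summable)
  have HD: "(D has_sum TT 1 (s-1) \<alpha>) UNIV"
    by (rule has_sum_SigmaD[OF T]) (use inner in simp)
  have HZ: "((\<lambda>n. genH \<alpha> * (1 / XX \<alpha> n ^ s)) has_sum genH \<alpha> * hzeta s \<alpha>) UNIV"
    using assms by (intro has_sum_cmult_right zeta_has_sum) auto
  have "((\<lambda>n. genH \<alpha> * (1 / XX \<alpha> n ^ s) + D n) has_sum genH \<alpha> * hzeta s \<alpha> + TT 1 (s-1) \<alpha>) UNIV"
    by (rule has_sum_add[OF HZ HD])
  moreover have "(\<lambda>n. genH \<alpha> * (1 / XX \<alpha> n ^ s) + D n) = (\<lambda>n. genH (real (Suc n) + 2 * \<alpha>) / (real (Suc n) + \<alpha>) ^ s)"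
    by (auto simp: D_def XX_def fun_eq_iff diff_divide_distrib)
  ultimately show ?thesis using has_sum_imp_sums by metis
qed

lemma tele:
  fixes g :: "nat \<Rightarrow> real"
  shows "(\<Sum>i=1..q. (-1::real)^(i-1) * (g i + g (i-1))) = g 0 + (-1)^(q+1) * g q"
proof (induction q)
  case 0 then show ?case by simp
next
  case (Suc q)
  have "(\<Sum>i=1..Suc q. (-1::real)^(i-1) * (g i + g (i-1)))
      = (\<Sum>i=1..q. (-1::real)^(i-1) * (g i + g (i-1))) + (-1)^q * (g (Suc q) + g q)"
    by simp
  also have "\<dots> = g 0 + (-1)^(Suc q+1) * g (Suc q)" unfolding Suc.IH by (simp add: algebra_simps)
  finally show ?case .
qed

lemma alt_sum:
  assumes "\<alpha> > 0" "p \<ge> 1" "m \<ge> 1"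
  shows "(\<Sum>i = 1..p - 1. (-1::real) ^ (i - 1) * hzeta (p + 1 - i) \<alpha> * hzeta (m + i) \<alpha>)
       = TT p m \<alpha> + (-1)^p * TT 1 (p+m-1) \<alpha>"
proof -
  define g where "g j = TT (p-j) (m+j) \<alpha>" for j
  have "(\<Sum>i = 1..p - 1. (-1::real) ^ (i - 1) * hzeta (p + 1 - i) \<alpha> * hzeta (m + i) \<alpha>)
      = (\<Sum>i=1..p-1. (-1::real)^(i-1) * (g i + g (i-1)))"
  proof (rule sum.cong)
    fix i assume i: "i \<in> {1..p-1}"
    have "hzeta (p + 1 - i) \<alpha> * hzeta (m + i) \<alpha> = TT (p+1-i-1) (m+i) \<alpha> + TT (p+1-i) (m+i-1) \<alpha>"
      using i assms by (intro TT_rec) auto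
    also have "\<dots> = g i + g (i-1)" using i by (simp add: g_def Suc_diff_le)
    finally show "(-1::real) ^ (i - 1) * hzeta (p + 1 - i) \<alpha> * hzeta (m + i) \<alpha> = (-1::real)^(i-1) * (g i + g (i-1))"
      by simp
  qed simp
  also have "\<dots> = g 0 + (-1)^(p-1+1) * g (p-1)" by (rule tele)
  also have "\<dots> = TT p m \<alpha> + (-1)^p * TT 1 (p+m-1) \<alpha>"
    using assms by (simp add: g_def add.commute)
  finally show ?thesis .
qed

theorem mainTheorem19:
  fixes p m :: nat and \<alpha> :: real
  assumes "p \<ge> 1" and "m \<ge> 1" and "\<alpha> > 0"
  shows "((-1::real) ^ (m - 1) - (-1) ^ (p - 1)) *
           (\<Sum>n. genH (real (Suc n) + 2 * \<alpha>) / (real (Suc n) + \<alpha>) ^ (p + m))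
         = ((-1::real) ^ (m - 1) - (-1) ^ (p - 1)) * genH \<alpha> * hzeta (p + m) \<alpha>
           + (\<Sum>i = 1..p - 1. (-1::real) ^ (i - 1) * hzeta (p + 1 - i) \<alpha> * hzeta (m + i) \<alpha>)
           - (\<Sum>i = 1..m - 1. (-1::real) ^ (i - 1) * hzeta (m + 1 - i) \<alpha> * hzeta (p + i) \<alpha>)
       \<and> (\<Sum>n. genH (real (Suc n) + 2 * \<alpha>) / (real (Suc n) + \<alpha>) ^ 3)
         = genH \<alpha> * hzeta 3 \<alpha> + 1 / 2 * (hzeta 2 \<alpha>) ^ 2"
proof -
  have gen: "((-1::real) ^ (m - 1) - (-1) ^ (p - 1)) *
           (\<Sum>n. genH (real (Suc n) + 2 * \<alpha>) / (real (Suc n) + \<alpha>) ^ (p + m))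
         = ((-1::real) ^ (m - 1) - (-1) ^ (p - 1)) * genH \<alpha> * hzeta (p + m) \<alpha>
           + (\<Sum>i = 1..p - 1. (-1::real) ^ (i - 1) * hzeta (p + 1 - i) \<alpha> * hzeta (m + i) \<alpha>)
           - (\<Sum>i = 1..m - 1. (-1::real) ^ (i - 1) * hzeta (m + 1 - i) \<alpha> * hzeta (p + i) \<alpha>)"
    if "p \<ge> 1" "m \<ge> 1" for p m
  proof (cases "p = 1 \<and> m = 1")
    case True then show ?thesis by simp
  next
    case False
    hence s3: "p + m \<ge> 3" using that by auto
    have S: "(\<Sum>n. genH (real (Suc n) + 2 * \<alpha>) / (real (Suc n) + \<alpha>) ^ (p + m))
          = genH \<alpha> * hzeta (p+m) \<alpha> + TT 1 (p+m-1) \<alpha>"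
      using main_series[OF assms(3) s3] by (simp add: sums_iff)
    have A1: "(\<Sum>i = 1..p - 1. (-1::real) ^ (i - 1) * hzeta (p + 1 - i) \<alpha> * hzeta (m + i) \<alpha>)
       = TT p m \<alpha> + (-1)^p * TT 1 (p+m-1) \<alpha>" by (rule alt_sum) (use that assms in auto)
    have A2: "(\<Sum>i = 1..m - 1. (-1::real) ^ (i - 1) * hzeta (m + 1 - i) \<alpha> * hzeta (p + i) \<alpha>)
       = TT m p \<alpha> + (-1)^m * TT 1 (m+p-1) \<alpha>" by (rule alt_sum) (use that assms in auto)
    have c: "((-1::real) ^ (m - 1) - (-1) ^ (p - 1)) = (-1)^p - (-1)^m"
    proof -
      have "(-1::real)^m = - ((-1)^(m-1))" using that by (cases m) auto
      moreover have "(-1::real)^p = - ((-1)^(p-1))" using that by (cases p) auto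
      ultimately show ?thesis by simp
    qed
    show ?thesis unfolding S A1 A2 c TT_sym[of m p] by (simp add: add.commute algebra_simps)
  qed
  have sp: "((-1::real) ^ (2 - 1) - (-1) ^ (1 - 1)) *
           (\<Sum>n. genH (real (Suc n) + 2 * \<alpha>) / (real (Suc n) + \<alpha>) ^ (1 + 2))
         = ((-1::real) ^ (2 - 1) - (-1) ^ (1 - 1)) * genH \<alpha> * hzeta (1 + 2) \<alpha>
           + (\<Sum>i = 1..1 - 1. (-1::real) ^ (i - 1) * hzeta (1 + 1 - i) \<alpha> * hzeta (2 + i) \<alpha>)
           - (\<Sum>i = 1..2 - 1. (-1::real) ^ (i - 1) * hzeta (2 + 1 - i) \<alpha> * hzeta (1 + i) \<alpha>)"
    by (rule gen) auto
  hence "-2 * (\<Sum>n. genH (real (Suc n) + 2 * \<alpha>) / (real (Suc n) + \<alpha>) ^ 3)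
         = -2 * genH \<alpha> * hzeta 3 \<alpha> - hzeta 2 \<alpha> * hzeta 2 \<alpha>"
    by (simp add: numeral_3_eq_3 numeral_2_eq_2)
  hence "(\<Sum>n. genH (real (Suc n) + 2 * \<alpha>) / (real (Suc n) + \<alpha>) ^ 3)
         = genH \<alpha> * hzeta 3 \<alpha> + 1 / 2 * (hzeta 2 \<alpha>) ^ 2"
    by (simp add: power2_eq_square)
  with gen[OF assms(1,2)] show ?thesis by blast
qed

end
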